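(* Consider the MPVC in $\mathbb R^2$: minimize $|x_1|+|x_2|$ subject to $g(x)=x_1+x_2\le0$, $H(x)=x_1\ge0$, $G(x)H(x)=x_1(x_1^2-x_2^2)\le0$ where $G(x)=x_1^2-x_2^2$ (so $m=1$, $l=0$, $q=1$). At $x^\ast=(0,0)$, MPVC-generalized quasinormality fails, but MPVC-ACQ holds. Moreover, the penalty function $P_\alpha$ is exact at $x^\ast$. Consequently, MPVC-ACQ does not imply MPVC-generalized quasinormality, and exactness of $P_\alpha$ at a local minimizer does not imply MPVC-generalized quasinormality there.
   Context: MPVC setup: for continuously differentiable $g_i,h_j,G_i,H_i:\mathbb R^n\to\mathbb R$ the constraints are $g_i(x)\le0$ $(i\le m)$, $h_j(x)=0$ $(j\le l)$, $H_i(x)\ge0$, $G_i(x)H_i(x)\le0$ $(i\le q)$, with feasible set $\mathcal C$. For $x^\ast\in\mathcal C$: $I_g=\{i:g_i(x^\ast)=0\}$, $I_+=\{i:H_i(x^\ast)>0\}$, $I_{+0}=\{i:H_i(x^\ast)>0,G_i(x^\ast)=0\}$, $I_{+-}=\{i:H_i(x^\ast)>0,G_i(x^\ast)<0\}$, $I_{0+}=\{i:H_i(x^\ast)=0,G_i(x^\ast)>0\}$, $I_{0-}=\{i:H_i(x^\ast)=0,G_i(x^\ast)<0\}$, $I_{00}=\{i:H_i(x^\ast)=0,G_i(x^\ast)=0\}$. Admissible multipliers: $(\lambda,\mu,\eta^G,\eta^H)\in\mathbb R^m\times\mathbb R^l\times\mathbb R^q\times\mathbb R^q$ with (i) $\sum_i\lambda_i\nabla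 g_i(x^\ast)+\sum_j\mu_j\nabla h_j(x^\ast)+\sum_i\eta^G_i\nabla G_i(x^\ast)-\sum_i\eta^H_i\nabla H_i(x^\ast)=0$; (ii) $\lambda_i\ge0$ for $i\in I_g$, $\lambda_i=0$ for $i\notin I_g$; $\eta^G_i=0$ for $i\in I_{+-}\cup I_{0-}\cup I_{0+}$, $\eta^G_i\ge0$ for $i\in I_{+0}\cup I_{00}$; $\eta^H_i=0$ for $i\in I_+$, $\eta^H_i\ge0$ for $i\in I_{0-}$, $\eta^H_i$ free for $i\in I_{0+}$; $\eta^H_i\eta^G_i=0$ for $i\in I_{00}$. MPVC-generalized quasinormality holds at $x^\ast$ if there is no nonzero admissible multiplier for which there is a sequence $x^k\to x^\ast$ such that for all $k$: $\lambda_i>0\Rightarrow\lambda_ig_i(x^k)>0$; $\mu_j\neq0\Rightarrow\mu_jh_j(x^k)>0$; $\eta^H_i\ne0\Rightarrow\eta^H_iH_i(x^k)<0$; $\eta^G_i>0\Rightarrow\eta^G_iG_i(x^k)>0$. $T_{\mathcal C}(x^\ast)$ denotes the Bouligand tangent cone of $\mathcal C$ at $x^\ast$. The MPVC-linearized cone is $L_{MPVC}(x^\ast)=\{d:\nabla g_i(x^\ast)^Td\le0\ (i\in I_g);\ \nabla h_j(x^\ast)^Td=0\ (\forall j);\ \nabla H_i(x^\ast)^Td=0\ (i\in I_{0+});\ \nabla H_i(x^\ast)^Td\ge0\ (i\in I_{00}\cup I_{0-});\ \nabla G_i(x^\ast)^Td\le0\ (i\in I_{+0});\ (\nabla G_i(x^\ast)^Td)(\nabla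 H_i(x^\ast)^Td)\le0\ (i\in I_{00})\}$; MPVC-ACQ holds at $x^\ast$ if $T_{\mathcal C}(x^\ast)=L_{MPVC}(x^\ast)$. Penalty function: $P_\alpha(x)=f(x)+\alpha\big[\sum_i\max\{0,g_i(x)\}+\sum_j|h_j(x)|+\sum_i\max\{0,-H_i(x),\min\{G_i(x),H_i(x)\}\}\big]$ for $\alpha\ge0$; $P_\alpha$ is exact at $x^\ast$ if there is $\bar\alpha\ge0$ such that $x^\ast$ is a local minimizer of $P_\alpha$ on $\mathbb R^n$ for all $\alpha\ge\bar\alpha$. *)

theory Defs
  imports "HOL-Analysis.Analysis"
begin

text \<open>MPVC data: constraint functions indexed by nat (indices 0..m-1, 0..l-1, 0..q-1).
  The gradient pairing grad f(x)^T d is rendered as frechet_derivative f (at x) d.\<close>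

definition mpvc_feasible ::
  "(nat \<Rightarrow> 'a::euclidean_space \<Rightarrow> real) \<Rightarrow> nat \<Rightarrow> (nat \<Rightarrow> 'a \<Rightarrow> real) \<Rightarrow> nat \<Rightarrow>
   (nat \<Rightarrow> 'a \<Rightarrow> real) \<Rightarrow> (nat \<Rightarrow> 'a \<Rightarrow> real) \<Rightarrow> nat \<Rightarrow> 'a set" where
  "mpvc_feasible g m h l G H q =
     {x. (\<forall>i<m. g i x \<le> 0) \<and> (\<forall>j<l. h j x = 0) \<and>
         (\<forall>i<q. H i x \<ge> 0 \<and> G i x * H i x \<le> 0)}"

definition grad_dir :: "('a::euclidean_space \<Rightarrow> real) \<Rightarrow> 'a \<Rightarrow> 'a \<Rightarrow> real" where
  "grad_dir f x d = frechet_derivative f (at x) d"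

definition mpvc_admissible_mult ::
  "(nat \<Rightarrow> 'a::euclidean_space \<Rightarrow> real) \<Rightarrow> nat \<Rightarrow> (nat \<Rightarrow> 'a \<Rightarrow> real) \<Rightarrow> nat \<Rightarrow>
   (nat \<Rightarrow> 'a \<Rightarrow> real) \<Rightarrow> (nat \<Rightarrow> 'a \<Rightarrow> real) \<Rightarrow> nat \<Rightarrow> 'a \<Rightarrow>
   (nat \<Rightarrow> real) \<Rightarrow> (nat \<Rightarrow> real) \<Rightarrow> (nat \<Rightarrow> real) \<Rightarrow> (nat \<Rightarrow> real) \<Rightarrow> bool" where
  "mpvc_admissible_mult g m h l G H q xs lam mu etaG etaH \<longleftrightarrow>
     \<comment> \<open>multipliers live in R^m x R^l x R^q x R^q: components outside the ranges are 0\<close>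
     (\<forall>i\<ge>m. lam i = 0) \<and> (\<forall>j\<ge>l. mu j = 0) \<and> (\<forall>i\<ge>q. etaG i = 0 \<and> etaH i = 0) \<and>
     \<comment> \<open>(i) stationarity-type equation\<close>
     (\<forall>d. (\<Sum>i<m. lam i * grad_dir (g i) xs d) + (\<Sum>j<l. mu j * grad_dir (h j) xs d)
          + (\<Sum>i<q. etaG i * grad_dir (G i) xs d) - (\<Sum>i<q. etaH i * grad_dir (H i) xs d) = 0) \<and>
     \<comment> \<open>(ii) sign conditions\<close>
     (\<forall>i<m. (g i xs = 0 \<longrightarrow> lam i \<ge> 0) \<and> (g i xs \<noteq> 0 \<longrightarrow> lam i = 0)) \<and>
     (\<forall>i<q.
        ((H i xs > 0 \<and> G i xs < 0) \<or> (H i xs = 0 \<and> G i xs < 0) \<or> (H i xs = 0 \<and> G i xs > 0)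
            \<longrightarrow> etaG i = 0) \<and>
        ((H i xs > 0 \<and> G i xs = 0) \<or> (H i xs = 0 \<and> G i xs = 0) \<longrightarrow> etaG i \<ge> 0) \<and>
        (H i xs > 0 \<longrightarrow> etaH i = 0) \<and>
        (H i xs = 0 \<and> G i xs < 0 \<longrightarrow> etaH i \<ge> 0) \<and>
        (H i xs = 0 \<and> G i xs = 0 \<longrightarrow> etaH i * etaG i = 0))"

definition mpvc_GQN ::
  "(nat \<Rightarrow> 'a::euclidean_space \<Rightarrow> real) \<Rightarrow> nat \<Rightarrow> (nat \<Rightarrow> 'a \<Rightarrow> real) \<Rightarrow> nat \<Rightarrow>
   (nat \<Rightarrow> 'a \<Rightarrow> real) \<Rightarrow> (nat \<Rightarrow> 'a \<Rightarrow> real) \<Rightarrow> nat \<Rightarrow> 'a \<Rightarrow> bool" where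
  "mpvc_GQN g m h l G H q xs \<longleftrightarrow>
     \<not> (\<exists>lam mu etaG etaH.
          mpvc_admissible_mult g m h l G H q xs lam mu etaG etaH \<and>
          (lam, mu, etaG, etaH) \<noteq> (\<lambda>_. 0, \<lambda>_. 0, \<lambda>_. 0, \<lambda>_. 0) \<and>
          (\<exists>xk :: nat \<Rightarrow> 'a. xk \<longlonglongrightarrow> xs \<and>
             (\<forall>k. (\<forall>i<m. lam i > 0 \<longrightarrow> lam i * g i (xk k) > 0) \<and>
                  (\<forall>j<l. mu j \<noteq> 0 \<longrightarrow> mu j * h j (xk k) > 0) \<and>
                  (\<forall>i<q. etaH i \<noteq> 0 \<longrightarrow> etaH i * H i (xk k) < 0) \<and>
                  (\<forall>i<q. etaG i > 0 \<longrightarrow> etaG i * G i (xk k) > 0))))"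

definition tangent_cone :: "'a::real_normed_vector set \<Rightarrow> 'a \<Rightarrow> 'a set" where
  "tangent_cone C xs = {d. \<exists>(xk :: nat \<Rightarrow> 'a) (t :: nat \<Rightarrow> real).
      (\<forall>k. xk k \<in> C \<and> t k > 0) \<and> xk \<longlonglongrightarrow> xs \<and> t \<longlonglongrightarrow> 0 \<and>
      (\<lambda>k. (1 / t k) *\<^sub>R (xk k - xs)) \<longlonglongrightarrow> d}"

definition mpvc_lin_cone ::
  "(nat \<Rightarrow> 'a::euclidean_space \<Rightarrow> real) \<Rightarrow> nat \<Rightarrow> (nat \<Rightarrow> 'a \<Rightarrow> real) \<Rightarrow> nat \<Rightarrow>
   (nat \<Rightarrow> 'a \<Rightarrow> real) \<Rightarrow> (nat \<Rightarrow> 'a \<Rightarrow> real) \<Rightarrow> nat \<Rightarrow> 'a \<Rightarrow> 'a set" where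
  "mpvc_lin_cone g m h l G H q xs = {d.
     (\<forall>i<m. g i xs = 0 \<longrightarrow> grad_dir (g i) xs d \<le> 0) \<and>
     (\<forall>j<l. grad_dir (h j) xs d = 0) \<and>
     (\<forall>i<q. H i xs = 0 \<and> G i xs > 0 \<longrightarrow> grad_dir (H i) xs d = 0) \<and>
     (\<forall>i<q. H i xs = 0 \<and> G i xs \<le> 0 \<longrightarrow> grad_dir (H i) xs d \<ge> 0) \<and>
     (\<forall>i<q. H i xs > 0 \<and> G i xs = 0 \<longrightarrow> grad_dir (G i) xs d \<le> 0) \<and>
     (\<forall>i<q. H i xs = 0 \<and> G i xs = 0 \<longrightarrow> grad_dir (G i) xs d * grad_dir (H i) xs d \<le> 0)}"

definition mpvc_ACQ ::
  "(nat \<Rightarrow> 'a::euclidean_space \<Rightarrow> real) \<Rightarrow> nat \<Rightarrow> (nat \<Rightarrow> 'a \<Rightarrow> real) \<Rightarrow> nat \<Rightarrow>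
   (nat \<Rightarrow> 'a \<Rightarrow> real) \<Rightarrow> (nat \<Rightarrow> 'a \<Rightarrow> real) \<Rightarrow> nat \<Rightarrow> 'a \<Rightarrow> bool" where
  "mpvc_ACQ g m h l G H q xs \<longleftrightarrow>
     tangent_cone (mpvc_feasible g m h l G H q) xs = mpvc_lin_cone g m h l G H q xs"

definition mpvc_penalty ::
  "('a \<Rightarrow> real) \<Rightarrow> (nat \<Rightarrow> 'a \<Rightarrow> real) \<Rightarrow> nat \<Rightarrow> (nat \<Rightarrow> 'a \<Rightarrow> real) \<Rightarrow> nat \<Rightarrow>
   (nat \<Rightarrow> 'a \<Rightarrow> real) \<Rightarrow> (nat \<Rightarrow> 'a \<Rightarrow> real) \<Rightarrow> nat \<Rightarrow> real \<Rightarrow> 'a \<Rightarrow> real" where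
  "mpvc_penalty f g m h l G H q \<alpha> x = f x + \<alpha> *
     ((\<Sum>i<m. max 0 (g i x)) + (\<Sum>j<l. \<bar>h j x\<bar>) +
      (\<Sum>i<q. max 0 (max (- H i x) (min (G i x) (H i x)))))"

definition local_min_on :: "('a::metric_space \<Rightarrow> real) \<Rightarrow> 'a set \<Rightarrow> 'a \<Rightarrow> bool" where
  "local_min_on F S xs \<longleftrightarrow> xs \<in> S \<and> (\<exists>e>0. \<forall>y\<in>S. dist y xs < e \<longrightarrow> F xs \<le> F y)"

definition mpvc_penalty_exact ::
  "('a::euclidean_space \<Rightarrow> real) \<Rightarrow> (nat \<Rightarrow> 'a \<Rightarrow> real) \<Rightarrow> nat \<Rightarrow> (nat \<Rightarrow> 'a \<Rightarrow> real) \<Rightarrow> nat \<Rightarrow>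
   (nat \<Rightarrow> 'a \<Rightarrow> real) \<Rightarrow> (nat \<Rightarrow> 'a \<Rightarrow> real) \<Rightarrow> nat \<Rightarrow> 'a \<Rightarrow> bool" where
  "mpvc_penalty_exact f g m h l G H q xs \<longleftrightarrow>
     (\<exists>\<alpha>0\<ge>0. \<forall>\<alpha>\<ge>\<alpha>0. local_min_on (mpvc_penalty f g m h l G H q \<alpha>) UNIV xs)"

end

theory Submission
  imports Defs
begin

lemma gd_sum: "grad_dir (\<lambda>x::real\<times>real. fst x + snd x) (0,0) d = fst d + snd d"
proof -
  have "((\<lambda>x::real\<times>real. fst x + snd x) has_derivative (\<lambda>d. fst d + snd d)) (at (0,0))"
    by (intro has_derivative_add has_derivative_fst has_derivative_snd has_derivative_ident)
  then show ?thesis unfolding grad_dir_def by (metis frechet_derivative_at)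
qed

lemma gd_fst: "grad_dir (\<lambda>x::real\<times>real. fst x) (0,0) d = fst d"
proof -
  have "((\<lambda>x::real\<times>real. fst x) has_derivative (\<lambda>d. fst d)) (at (0,0))"
    by (intro has_derivative_fst has_derivative_ident)
  then show ?thesis unfolding grad_dir_def by (metis frechet_derivative_at)
qed

lemma gd_G: "grad_dir (\<lambda>x::real\<times>real. (fst x)^2 - (snd x)^2) (0,0) d = 0"
proof -
  have "((\<lambda>x::real\<times>real. fst x * fst x - snd x * snd x) has_derivative
     (\<lambda>d. (fst ((0,0)::real\<times>real) * fst d + fst d * fst ((0,0)::real\<times>real)) - (snd ((0,0)::real\<times>real) * snd d + snd d * snd ((0,0)::real\<times>real)))) (at (0,0))"
    by (intro has_derivative_diff has_derivative_mult has_derivative_fst has_derivative_snd has_derivative_ident)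
  then have "((\<lambda>x::real\<times>real. (fst x)^2 - (snd x)^2) has_derivative (\<lambda>d. 0)) (at (0,0))"
    by (simp add: power2_eq_square)
  then show ?thesis unfolding grad_dir_def by (metis frechet_derivative_at)
qed

lemma feas: "mpvc_feasible (\<lambda>_ x. fst x + snd x) 1 (\<lambda>_ _. 0) 0
     (\<lambda>_ x. (fst x)^2 - (snd x)^2) (\<lambda>_ x. fst x) 1 = {x. fst x \<ge> 0 \<and> fst x + snd x \<le> 0}"
proof -
  have "(fst x \<ge> 0 \<and> ((fst x)^2 - (snd x)^2) * fst x \<le> 0 \<and> fst x + snd x \<le> 0)
        \<longleftrightarrow> (fst x \<ge> 0 \<and> fst x + snd x \<le> 0)" for x :: "real \<times> real"
  proof
    assume a: "fst x \<ge> 0 \<and> fst x + snd x \<le> 0"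
    have "(fst x)^2 \<le> (snd x)^2" 
    proof -
      have "(fst x)^2 \<le> (- snd x)^2" using a by (intro power_mono) auto
      then show ?thesis by simp
    qed
    then show "fst x \<ge> 0 \<and> ((fst x)^2 - (snd x)^2) * fst x \<le> 0 \<and> fst x + snd x \<le> 0"
      using a by (simp add: mult_nonpos_nonneg)
  qed auto
  then show ?thesis unfolding mpvc_feasible_def by auto
qed

lemma tc: "tangent_cone {x::real\<times>real. fst x \<ge> 0 \<and> fst x + snd x \<le> 0} (0,0)
   = {x. fst x \<ge> 0 \<and> fst x + snd x \<le> 0}" (is "tangent_cone ?C _ = _")
proof
  show "tangent_cone ?C (0,0) \<subseteq> ?C"
  proof
    fix d assume "d \<in> tangent_cone ?C (0,0)"
    then obtain xk and t :: "nat \<Rightarrow> real" where xk: "\<forall>k. xk k \<in> ?C \<and> t k > 0"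
      and lim: "(\<lambda>k. (1 / t k) *\<^sub>R (xk k - (0,0))) \<longlonglongrightarrow> d"
      unfolding tangent_cone_def by blast
    let ?y = "\<lambda>k. (1 / t k) *\<^sub>R (xk k - (0,0))"
    have y: "fst (?y k) \<ge> 0 \<and> fst (?y k) + snd (?y k) \<le> 0" for k
    proof -
      have "fst (xk k) \<ge> 0" "fst (xk k) + snd (xk k) \<le> 0" "t k > 0" using xk by auto
      then show ?thesis
        by (auto simp: zero_prod_def divide_nonneg_pos divide_nonpos_pos
             simp flip: add_divide_distrib)
    qed
    have l1: "(\<lambda>k. fst (?y k)) \<longlonglongrightarrow> fst d" using lim by (rule tendsto_fst)
    have l2: "(\<lambda>k. fst (?y k) + snd (?y k)) \<longlonglongrightarrow> fst d + snd d"
      using lim by (intro tendsto_add tendsto_fst tendsto_snd)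
    have "fst d \<ge> 0" using l1 y by (intro LIMSEQ_le_const) auto
    moreover have "fst d + snd d \<le> 0" using l2 y by (intro LIMSEQ_le_const2) auto
    ultimately show "d \<in> ?C" by simp
  qed
next
  show "?C \<subseteq> tangent_cone ?C (0,0)"
  proof
    fix d :: "real \<times> real" assume d: "d \<in> ?C"
    define t where "t = (\<lambda>k::nat. 1 / (real k + 1))"
    define xk where "xk = (\<lambda>k. t k *\<^sub>R d)"
    have tp: "t k > 0" for k unfolding t_def by simp
    have t0: "t \<longlonglongrightarrow> 0" unfolding t_def using LIMSEQ_inverse_real_of_nat by (simp add: inverse_eq_divide add.commute)
    have "xk k \<in> ?C" for k using d tp[of k]
      by (auto simp: xk_def mult_nonneg_nonpos simp flip: distrib_left)
    moreover have "xk \<longlonglongrightarrow> (0,0)"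
      using tendsto_scaleR[OF t0 tendsto_const[of d]] by (simp add: xk_def zero_prod_def)
    moreover have "(\<lambda>k. (1 / t k) *\<^sub>R (xk k - (0,0))) = (\<lambda>k. d)"
      using tp by (auto simp: xk_def zero_prod_def[symmetric] intro!: ext simp: order_less_imp_not_eq2)
    ultimately show "d \<in> tangent_cone ?C (0,0)"
      unfolding tangent_cone_def using tp t0 by (intro CollectI exI[of _ xk] exI[of _ t]) auto
  qed
qed

theorem mainTheorem6:
  fixes f :: "real \<times> real \<Rightarrow> real"
    and g h G H :: "nat \<Rightarrow> real \<times> real \<Rightarrow> real"
  defines "f \<equiv> (\<lambda>x. \<bar>fst x\<bar> + \<bar>snd x\<bar>)"
    and "g \<equiv> (\<lambda>_ x. fst x + snd x)"
    and "h \<equiv> (\<lambda>_ _. 0)"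
    and "G \<equiv> (\<lambda>_ x. (fst x)^2 - (snd x)^2)"
    and "H \<equiv> (\<lambda>_ x. fst x)"
  shows "local_min_on f (mpvc_feasible g 1 h 0 G H 1) (0, 0)
       \<and> \<not> mpvc_GQN g 1 h 0 G H 1 (0, 0)
       \<and> mpvc_ACQ g 1 h 0 G H 1 (0, 0)
       \<and> mpvc_penalty_exact f g 1 h 0 G H 1 (0, 0)"
proof (intro conjI)
  have F: "mpvc_feasible g 1 h 0 G H 1 = {x. fst x \<ge> 0 \<and> fst x + snd x \<le> 0}"
    unfolding g_def h_def G_def H_def by (rule feas)
  show "local_min_on f (mpvc_feasible g 1 h 0 G H 1) (0, 0)"
    unfolding F local_min_on_def f_def by (auto intro: exI[of _ 1])
  show "mpvc_ACQ g 1 h 0 G H 1 (0, 0)"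
  proof -
    have "mpvc_lin_cone g 1 h 0 G H 1 (0,0) = {x. fst x \<ge> 0 \<and> fst x + snd x \<le> 0}"
      unfolding mpvc_lin_cone_def g_def h_def G_def H_def
      using gd_sum gd_fst gd_G by auto
    then show ?thesis unfolding mpvc_ACQ_def F tc by simp
  qed
  show "mpvc_penalty_exact f g 1 h 0 G H 1 (0, 0)"
    unfolding mpvc_penalty_exact_def
  proof (intro exI[of _ 0] conjI allI impI)
    fix \<alpha> :: real assume a: "\<alpha> \<ge> 0"
    show "local_min_on (mpvc_penalty f g 1 h 0 G H 1 \<alpha>) UNIV (0, 0)"
      unfolding local_min_on_def
    proof (intro conjI exI[of _ 1] ballI impI)
      fix y :: "real \<times> real"
      have "0 \<le> \<alpha> * (max 0 (g 0 y) + max 0 (max (- H 0 y) (min (G 0 y) (H 0 y))))"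
        using a by simp
      moreover have "0 \<le> f y" unfolding f_def by simp
      ultimately show "mpvc_penalty f g 1 h 0 G H 1 \<alpha> (0, 0) \<le> mpvc_penalty f g 1 h 0 G H 1 \<alpha> y"
        unfolding mpvc_penalty_def by (simp add: f_def g_def h_def G_def H_def)
    qed auto
  qed simp
  show "\<not> mpvc_GQN g 1 h 0 G H 1 (0, 0)"
    unfolding mpvc_GQN_def not_not
  proof -
    define eG :: "nat \<Rightarrow> real" where "eG = (\<lambda>i. if i = 0 then 1 else 0)"
    define xk :: "nat \<Rightarrow> real \<times> real" where "xk = (\<lambda>k. (1 / (real k + 1), 0))"
    have adm: "mpvc_admissible_mult g 1 h 0 G H 1 (0,0) (\<lambda>_. 0) (\<lambda>_. 0) eG (\<lambda>_. 0)"
      unfolding mpvc_admissible_mult_def g_def h_def G_def H_def eG_def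
      using gd_G by auto
    have nz: "((\<lambda>_::nat. 0::real), (\<lambda>_::nat. 0::real), eG, (\<lambda>_::nat. 0::real))
       \<noteq> (\<lambda>_. 0, \<lambda>_. 0, \<lambda>_. 0, \<lambda>_. 0)"
      unfolding eG_def by (auto dest: fun_cong[of _ _ 0])
    have lim: "xk \<longlonglongrightarrow> (0,0)"
    proof -
      have "(\<lambda>k. 1 / (real k + 1)) \<longlonglongrightarrow> 0"
        using LIMSEQ_inverse_real_of_nat by (simp add: inverse_eq_divide add.commute)
      then show ?thesis unfolding xk_def by (intro tendsto_Pair) auto
    qed
    have pos: "\<forall>k. eG 0 * G 0 (xk k) > 0"
      unfolding eG_def G_def xk_def by simp
    show "\<exists>lam mu etaG etaH.
          mpvc_admissible_mult g 1 h 0 G H 1 (0,0) lam mu etaG etaH \<and>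
          (lam, mu, etaG, etaH) \<noteq> (\<lambda>_. 0, \<lambda>_. 0, \<lambda>_. 0, \<lambda>_. 0) \<and>
          (\<exists>xk :: nat \<Rightarrow> real \<times> real. xk \<longlonglongrightarrow> (0,0) \<and>
             (\<forall>k. (\<forall>i<1. lam i > 0 \<longrightarrow> lam i * g i (xk k) > 0) \<and>
                  (\<forall>j<0. mu j \<noteq> 0 \<longrightarrow> mu j * h j (xk k) > 0) \<and>
                  (\<forall>i<1. etaH i \<noteq> 0 \<longrightarrow> etaH i * H i (xk k) < 0) \<and>
                  (\<forall>i<1. etaG i > 0 \<longrightarrow> etaG i * G i (xk k) > 0)))"
      using adm nz lim pos by (intro exI[of _ "\<lambda>_. 0"] exI[of _ eG] exI[of _ xk]) auto
  qed
qed

end
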